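(* Let $s\in\{+1,-1\}$, $d\ge1$, and let $f\in\mathcal A_s(d)$ be radial with $\widehat f=sf$ and $f(0)=0$. Suppose there exists a sequence $\{x_n\}_{n\in\mathbb{N}}\subseteq\mathbb{R}^d\setminus\{0\}$ with $x_n\to0$ and $s f(x_n)\ge 0$ for all $n$. Then $\int_{\mathbb{R}^d}|y|^2|f(y)|\,dy<\infty$ and $$\int_{\mathbb{R}^d}|y|^2 f(y)\,dy\le 0.$$
   Context: Fourier transform: $\widehat f(\xi)=\int_{\mathbb{R}^d} f(x)e^{-2\pi i\langle x,\xi\rangle}\,dx$. Eventually nonnegative means $\ge0$ for all sufficiently large $|x|$. $\mathcal A_+(d)$: functions $f:\mathbb{R}^d\to\mathbb{R}$ with $f,\widehat f\in L^1$, $\widehat f$ real-valued, $f$ eventually nonnegative with $\widehat f(0)\le0$, and $\widehat f$ eventually nonnegative with $f(0)\le0$. $\mathcal A_-(d)$: functions $f:\mathbb{R}^d\to\mathbb{R}$ with $f,\widehat f\in L^1$, $\widehat f$ real-valued, $f$ eventually nonnegative with $\widehat f(0)\le0$, and $-\widehat f$ eventually nonnegative with $f(0)\ge0$. Here $\mathcal A_{+1}=\mathcal A_+$, $\mathcal A_{-1}=\mathcal A_-$. *)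

theory Defs
  imports "HOL-Analysis.Analysis"
begin

text \<open>Fourier transform with the convention
  \<open>\<hat>f(\<xi>) = \<integral> f(x) e^{-2\<pi> i \<langle>x,\<xi>\<rangle>} dx\<close>, on a Euclidean space of dimension d = DIM('a).\<close>
definition fourier :: "('a::euclidean_space \<Rightarrow> real) \<Rightarrow> 'a \<Rightarrow> complex" where
  "fourier f \<xi> = (LINT x|lborel. complex_of_real (f x) * cis (- 2 * pi * (x \<bullet> \<xi>)))"

definition eventually_nonneg :: "('a::real_normed_vector \<Rightarrow> real) \<Rightarrow> bool" where
  "eventually_nonneg g \<longleftrightarrow> (\<exists>R. \<forall>x. R \<le> norm x \<longrightarrow> 0 \<le> g x)"

definition radial :: "('a::real_normed_vector \<Rightarrow> real) \<Rightarrow> bool" where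
  "radial f \<longleftrightarrow> (\<forall>x y. norm x = norm y \<longrightarrow> f x = f y)"

definition admissible :: "('a::euclidean_space \<Rightarrow> real) \<Rightarrow> bool" where
  "admissible f \<longleftrightarrow> integrable lborel f \<and> integrable lborel (fourier f)
     \<and> (\<forall>\<xi>. Im (fourier f \<xi>) = 0)"

definition A_plus :: "('a::euclidean_space \<Rightarrow> real) set" where
  "A_plus = {f. admissible f
     \<and> eventually_nonneg f \<and> Re (fourier f 0) \<le> 0
     \<and> eventually_nonneg (\<lambda>\<xi>. Re (fourier f \<xi>)) \<and> f 0 \<le> 0}"

definition A_minus :: "('a::euclidean_space \<Rightarrow> real) set" where
  "A_minus = {f. admissible f
     \<and> eventually_nonneg f \<and> Re (fourier f 0) \<le> 0
     \<and> eventually_nonneg (\<lambda>\<xi>. - Re (fourier f \<xi>)) \<and> 0 \<le> f 0}"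

definition A_s :: "real \<Rightarrow> ('a::euclidean_space \<Rightarrow> real) set" where
  "A_s s = (if s = 1 then A_plus else A_minus)"

end

theory Submission
  imports Defs "HOL-Real_Asymp.Real_Asymp"
begin

lemma one_minus_cos_le: "1 - cos (u::real) \<le> u^2/2"
proof -
  have "cos u = 1 - 2 * (sin (u/2))^2" using cos_double_sin[of "u/2"] by simp
  moreover have "(sin (u/2))^2 \<le> (u/2)^2"
    using abs_sin_x_le_abs_x[of "u/2"] by (metis abs_ge_zero power2_abs power_mono)
  ultimately show ?thesis by (simp add: power_divide)
qed

lemma lim_cos_aux: "((\<lambda>u::real. (1 - cos u)/u^2) \<longlongrightarrow> 1/2) (at 0)"
  by real_asymp

lemma lim_cos_seq:
  fixes t :: "nat \<Rightarrow> real"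
  assumes tpos: "\<And>n. t n > 0" and t0: "t \<longlonglongrightarrow> 0"
  shows "(\<lambda>n. (1 - cos (c * t n)) / (t n)^2) \<longlonglongrightarrow> c^2/2"
proof (cases "c = 0")
  case True then show ?thesis by simp
next
  case False
  have u: "filterlim (\<lambda>n. c * t n) (at 0) sequentially"
    apply (rule filterlim_atI)
    using tendsto_mult_right_zero[OF t0, of c] apply simp
    using False tpos by (simp add: less_imp_neq[symmetric])
  have "(\<lambda>n. (1 - cos (c * t n)) / (c * t n)^2) \<longlonglongrightarrow> 1/2"
    using filterlim_compose[OF lim_cos_aux u] by simp
  then have "(\<lambda>n. c^2 * ((1 - cos (c * t n)) / (c * t n)^2)) \<longlonglongrightarrow> c^2 * (1/2)"
    by (intro tendsto_mult_left)
  moreover have "\<And>n. c^2 * ((1 - cos (c * t n)) / (c * t n)^2) = (1 - cos (c * t n)) / (t n)^2"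
    using False tpos by (simp add: power_mult_distrib field_simps less_imp_neq[symmetric])
  ultimately show ?thesis by simp
qed

lemma key:
  fixes f :: "'a::euclidean_space \<Rightarrow> real" and v :: 'a and t :: "nat \<Rightarrow> real"
  assumes intf: "integrable lborel f"
    and R: "\<forall>y. R \<le> norm y \<longrightarrow> 0 \<le> f y"
    and tpos: "\<And>n. t n > 0" and t0: "t \<longlonglongrightarrow> 0"
    and ineq: "\<And>n. (LINT y|lborel. f y) \<le> (LINT y|lborel. f y * cos (2*pi*(y \<bullet> (t n *\<^sub>R v))))"
  shows "integrable lborel (\<lambda>y. (y \<bullet> v)^2 * f y) \<and> (LINT y|lborel. (y \<bullet> v)^2 * f y) \<le> 0"
proof -
  have fm: "f \<in> borel_measurable lborel" using intf by auto
  have cint: "integrable lborel (\<lambda>y. f y * cos (c * (y \<bullet> w)))" for c w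
    apply (rule Bochner_Integration.integrable_bound[OF intf])
    using fm apply measurable
    by (intro AE_I2) (simp add: abs_mult mult_left_le)
  define g where "g n y = f y * (1 - cos (2*pi*(t n) * (y \<bullet> v))) / (t n)^2" for n y
  define \<phi> where "\<phi> y = 2*pi^2 * (y \<bullet> v)^2 * \<bar>f y\<bar> * indicator (ball 0 R) y" for y
  define L where "L y = 2*pi^2 * (y \<bullet> v)^2 * f y + \<phi> y" for y
  have gint: "integrable lborel (g n)" for n
    unfolding g_def using intf cint[of "2*pi*t n" v]
    by (simp add: right_diff_distrib)
  have gle: "(LINT y|lborel. g n y) \<le> 0" for n
  proof -
    have "(LINT y|lborel. g n y) = ((LINT y|lborel. f y) - (LINT y|lborel. f y * cos (2*pi*t n * (y \<bullet> v)))) / (t n)^2"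
      unfolding g_def using intf cint[of "2*pi*t n" v]
      by (simp add: right_diff_distrib)
    moreover have "(LINT y|lborel. f y) \<le> (LINT y|lborel. f y * cos (2*pi*t n * (y \<bullet> v)))"
      using ineq[of n] by (simp add: mult.assoc)
    ultimately show ?thesis by (simp add: divide_nonpos_nonneg)
  qed
  have [measurable]: "ball (0::'a) R \<in> sets borel" by simp
  have \<phi>m: "\<phi> \<in> borel_measurable lborel" unfolding \<phi>_def using fm by measurable
  have \<phi>int: "integrable lborel \<phi>"
  proof (rule Bochner_Integration.integrable_bound[of _ "\<lambda>y. 2*pi^2 * (R * norm v)^2 * f y"])
    show "integrable lborel (\<lambda>y. 2*pi^2 * (R * norm v)^2 * f y)" using intf by simp
    show "AE y in lborel. norm (\<phi> y) \<le> norm (2*pi^2 * (R * norm v)^2 * f y)"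
    proof (rule AE_I2)
      fix y :: 'a
      show "norm (\<phi> y) \<le> norm (2*pi^2 * (R * norm v)^2 * f y)"
      proof (cases "y \<in> ball 0 R")
        case True
        have "\<bar>y \<bullet> v\<bar> \<le> norm y * norm v" by (rule Cauchy_Schwarz_ineq2)
        also have "\<dots> \<le> R * norm v" using True by (auto intro: mult_right_mono)
        finally have "(y \<bullet> v)^2 \<le> (R * norm v)^2" by (metis abs_ge_zero power2_abs power_mono)
        then show ?thesis using True unfolding \<phi>_def
          by (auto simp: abs_mult intro!: mult_right_mono)
      qed (simp add: \<phi>_def)
    qed
  qed (rule \<phi>m)
  have Gnn: "0 \<le> g n y + \<phi> y" for n y
  proof (cases "y \<in> ball 0 R")
    case True
    have c1: "1 - cos (2*pi*(t n) * (y \<bullet> v)) \<le> (2*pi*(t n) * (y \<bullet> v))^2/2"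
      by (rule one_minus_cos_le)
    have c0: "0 \<le> 1 - cos (2*pi*(t n) * (y \<bullet> v))" by simp
    have "\<bar>g n y\<bar> = \<bar>f y\<bar> * (1 - cos (2*pi*(t n) * (y \<bullet> v))) / (t n)^2"
      unfolding g_def using c0 by (simp add: abs_mult)
    also have "\<dots> \<le> \<bar>f y\<bar> * ((2*pi*(t n) * (y \<bullet> v))^2/2) / (t n)^2"
      by (intro divide_right_mono mult_left_mono c1) auto
    also have "\<dots> = \<phi> y" using True tpos[of n] unfolding \<phi>_def
      by (simp add: power_mult_distrib field_simps)
    finally show ?thesis by linarith
  next
    case False
    then have "0 \<le> f y" using R by (auto simp: dist_norm)
    then show ?thesis using False unfolding g_def \<phi>_def by simp
  qed
  have Lnn: "0 \<le> L y" for y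
  proof (cases "y \<in> ball 0 R")
    case True
    have "0 \<le> 2*pi^2 * (y \<bullet> v)^2 * (f y + \<bar>f y\<bar>)" by (intro mult_nonneg_nonneg) auto
    then show ?thesis using True unfolding L_def \<phi>_def by (simp add: algebra_simps)
  next
    case False
    then have "0 \<le> f y" using R by (auto simp: dist_norm)
    then show ?thesis using False unfolding L_def \<phi>_def by simp
  qed
  have conv: "(\<lambda>n. g n y + \<phi> y) \<longlonglongrightarrow> L y" for y
  proof -
    have "(\<lambda>n. f y * ((1 - cos (2*pi*(y \<bullet> v) * t n)) / (t n)^2)) \<longlonglongrightarrow> f y * ((2*pi*(y \<bullet> v))^2/2)"
      by (intro tendsto_mult_left lim_cos_seq tpos t0)
    then have "(\<lambda>n. g n y) \<longlonglongrightarrow> 2*pi^2 * (y \<bullet> v)^2 * f y"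
      unfolding g_def by (simp add: power_mult_distrib mult_ac)
    then show ?thesis unfolding L_def by (intro tendsto_add) auto
  qed
  have "(\<integral>\<^sup>+ y. ennreal (L y) \<partial>lborel) = (\<integral>\<^sup>+ y. liminf (\<lambda>n. ennreal (g n y + \<phi> y)) \<partial>lborel)"
    by (intro nn_integral_cong lim_imp_Liminf[symmetric] tendsto_ennrealI conv) simp
  also have "\<dots> \<le> liminf (\<lambda>n. \<integral>\<^sup>+ y. ennreal (g n y + \<phi> y) \<partial>lborel)"
    by (rule nn_integral_liminf) (use gint \<phi>m in auto)
  also have "\<dots> \<le> ennreal (LINT y|lborel. \<phi> y)"
  proof -
    have "(\<integral>\<^sup>+ y. ennreal (g n y + \<phi> y) \<partial>lborel) \<le> ennreal (LINT y|lborel. \<phi> y)" for n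
    proof -
      have "(\<integral>\<^sup>+ y. ennreal (g n y + \<phi> y) \<partial>lborel) = ennreal (LINT y|lborel. g n y + \<phi> y)"
        by (rule nn_integral_eq_integral) (use gint \<phi>int Gnn in auto)
      also have "(LINT y|lborel. g n y + \<phi> y) = (LINT y|lborel. g n y) + (LINT y|lborel. \<phi> y)"
        by (rule Bochner_Integration.integral_add) (use gint \<phi>int in auto)
      finally show ?thesis using gle[of n] by (simp add: ennreal_leI)
    qed
    then show ?thesis
      by (intro order.trans[OF Liminf_le_Limsup Limsup_bounded] always_eventually allI) auto
  qed
  finally have Lle: "(\<integral>\<^sup>+ y. ennreal (L y) \<partial>lborel) \<le> ennreal (LINT y|lborel. \<phi> y)" .
  have Lm: "L \<in> borel_measurable lborel" unfolding L_def using fm \<phi>m by measurable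
  have Lint: "integrable lborel L"
  proof (rule integrableI_nonneg[OF Lm])
    show "AE x in lborel. 0 \<le> L x" using Lnn by simp
    show "(\<integral>\<^sup>+ y. ennreal (L y) \<partial>lborel) < \<infinity>"
      using order.strict_trans1[OF Lle ennreal_less_top] by simp
  qed
  have e: "(\<integral>\<^sup>+ y. ennreal (L y) \<partial>lborel) = ennreal (LINT y|lborel. L y)"
    by (rule nn_integral_eq_integral[OF Lint]) (use Lnn in simp)
  have "ennreal (LINT y|lborel. L y) \<le> ennreal (LINT y|lborel. \<phi> y)"
    using Lle unfolding e .
  moreover have "0 \<le> (LINT y|lborel. \<phi> y)"
    by (rule integral_nonneg_AE) (simp add: \<phi>_def)
  ultimately have LLe: "(LINT y|lborel. L y) \<le> (LINT y|lborel. \<phi> y)"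
    by simp
  have eq: "(\<lambda>y. (y \<bullet> v)^2 * f y) = (\<lambda>y. (L y - \<phi> y) / (2*pi^2))"
    unfolding L_def by (auto simp: fun_eq_iff)
  have I: "integrable lborel (\<lambda>y. L y - \<phi> y)"
    by (rule Bochner_Integration.integrable_diff[OF Lint \<phi>int])
  have J: "(LINT y|lborel. L y - \<phi> y) = (LINT y|lborel. L y) - (LINT y|lborel. \<phi> y)"
    by (rule Bochner_Integration.integral_diff[OF Lint \<phi>int])
  have "integrable lborel (\<lambda>y. (L y - \<phi> y) / (2*pi^2))"
    using I by simp
  moreover have "(LINT y|lborel. (L y - \<phi> y) / (2*pi^2)) \<le> 0"
    using J LLe by (simp add: divide_nonpos_nonneg)
  ultimately show ?thesis unfolding eq by simp
qed


lemma fourier_Re: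
  fixes f :: "'a::euclidean_space \<Rightarrow> real"
  assumes intf: "integrable lborel f"
  shows "Re (fourier f \<xi>) = (LINT y|lborel. f y * cos (2*pi*(y \<bullet> \<xi>)))"
proof -
  have fm: "f \<in> borel_measurable lborel" using intf by auto
  have cm: "(\<lambda>x::'a. cis (- 2 * pi * (x \<bullet> \<xi>))) \<in> borel_measurable lborel"
  proof -
    have "continuous_on UNIV (\<lambda>x::'a. cis (- 2 * pi * (x \<bullet> \<xi>)))" by (intro continuous_intros)
    then show ?thesis by (simp add: borel_measurable_continuous_onI)
  qed
  have int: "integrable lborel (\<lambda>x. complex_of_real (f x) * cis (- 2 * pi * (x \<bullet> \<xi>)))"
    apply (rule Bochner_Integration.integrable_bound[OF intf])
    using fm cm apply measurable
    by (intro AE_I2) (simp add: norm_mult)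
  have "Re (fourier f \<xi>) = (LINT x|lborel. Re (complex_of_real (f x) * cis (- 2 * pi * (x \<bullet> \<xi>))))"
    unfolding fourier_def by (rule integral_Re[OF int, symmetric])
  also have "\<dots> = (LINT y|lborel. f y * cos (2*pi*(y \<bullet> \<xi>)))"
    by (simp add: cis.sel)
  finally show ?thesis .
qed

theorem lemma1:
  fixes f :: "'a::euclidean_space \<Rightarrow> real" and s :: real
  assumes s: "s = 1 \<or> s = -1"
    and fA: "f \<in> A_s s"
    and rad: "radial f"
    and eig: "\<forall>\<xi>. fourier f \<xi> = complex_of_real (s * f \<xi>)"
    and f0: "f 0 = 0"
    and seq: "\<exists>x :: nat \<Rightarrow> 'a. (\<forall>n. x n \<noteq> 0) \<and> x \<longlonglongrightarrow> 0 \<and> (\<forall>n. 0 \<le> s * f (x n))"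
  shows "integrable lborel (\<lambda>y. norm y ^ 2 * f y)
    \<and> (LINT y|lborel. norm y ^ 2 * f y) \<le> 0"
proof -
  have adm: "admissible f" and en: "eventually_nonneg f"
    using fA unfolding A_s_def A_plus_def A_minus_def by (auto split: if_splits)
  then have intf: "integrable lborel f" unfolding admissible_def by auto
  obtain R where R: "\<forall>y. R \<le> norm y \<longrightarrow> 0 \<le> f y" using en unfolding eventually_nonneg_def by auto
  obtain x :: "nat \<Rightarrow> 'a" where x0: "\<And>n. x n \<noteq> 0" and xl: "x \<longlonglongrightarrow> 0" and xs: "\<And>n. 0 \<le> s * f (x n)"
    using seq by auto
  define t where "t n = norm (x n)" for n
  have tpos: "\<And>n. t n > 0" using x0 by (simp add: t_def)
  have t0: "t \<longlonglongrightarrow> 0" unfolding t_def using tendsto_norm_zero[OF xl] .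
  have Re_eq: "Re (fourier f \<xi>) = s * f \<xi>" for \<xi> using eig by simp
  have int0: "(LINT y|lborel. f y) = 0"
    using fourier_Re[OF intf, of 0] Re_eq[of 0] f0 by simp
  have each: "integrable lborel (\<lambda>y. (y \<bullet> e)^2 * f y) \<and> (LINT y|lborel. (y \<bullet> e)^2 * f y) \<le> 0"
    if e: "e \<in> Basis" for e
  proof (rule key[OF intf R tpos t0])
    fix n
    have "norm (t n *\<^sub>R e) = norm (x n)" using e tpos[of n] by (simp add: t_def)
    then have "f (t n *\<^sub>R e) = f (x n)" using rad unfolding radial_def by blast
    then have "0 \<le> Re (fourier f (t n *\<^sub>R e))" using Re_eq xs by simp
    then show "(LINT y|lborel. f y) \<le> (LINT y|lborel. f y * cos (2*pi*(y \<bullet> (t n *\<^sub>R e))))"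
      using fourier_Re[OF intf] int0 by simp
  qed
  have nsq: "norm y ^ 2 * f y = (\<Sum>e\<in>Basis. (y \<bullet> e)^2 * f y)" for y :: 'a
  proof -
    have "norm y ^ 2 = y \<bullet> y" by (simp add: dot_square_norm)
    also have "\<dots> = (\<Sum>e\<in>Basis. (y \<bullet> e)^2)"
      by (subst euclidean_inner) (simp add: power2_eq_square)
    finally show ?thesis by (simp add: sum_distrib_right)
  qed
  have I: "integrable lborel (\<lambda>y. \<Sum>e\<in>Basis. (y \<bullet> e)^2 * f y)"
    using each by (intro Bochner_Integration.integrable_sum) auto
  have J: "(LINT y|lborel. (\<Sum>e\<in>Basis. (y \<bullet> e)^2 * f y)) = (\<Sum>e\<in>Basis. (LINT y|lborel. (y \<bullet> e)^2 * f y))"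
    using each by (intro Bochner_Integration.integral_sum) auto
  have "(\<Sum>e\<in>Basis. (LINT y|lborel. (y \<bullet> e)^2 * f y)) \<le> 0"
    using each by (intro sum_nonpos) auto
  then show ?thesis using I J unfolding nsq by simp
qed

end
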